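(* Let $\beta\in[0,1]$, $n\in\mathbb{N}$, and let $\underline{\Delta}:\{k\in\mathbb{N}_0^{\{0,1\}^2}: k_{++}=n\}\to[-1,1]$ be a function. A. The following three assertions are equivalent: (i) $\underline{\Delta}$ is a lower $\beta$-confidence bound for the parameter $q\mapsto q_{01}-q_{10}$ in the multinomial model $\mathcal{M}:=(\mathrm{M}_{n,q}: q\in\mathrm{prob}(\{0,1\}^2))$. (ii) $\underline{\Delta}$ is a lower $\beta$-confidence bound for the parameter $(\pi,\chi)\mapsto \pi_1(\chi^{(2)}_{1|1}-\chi^{(1)}_{1|1})-(1-\pi_1)(\chi^{(2)}_{0|0}-\chi^{(1)}_{0|0})$ in the full latent class model $\mathcal{P}_2$. (iii) $\underline{\Delta}$ is a lower $\beta$-confidence bound for the parameter $(\pi,\chi)\mapsto \pi_1(\chi^{(2)}_{1|1}-\chi^{(1)}_{1|1})$ in the restricted latent class model $\mathcal{P}_{2,\le}$. B. Let $\underline{\Delta}$ satisfy (i)–(iii) and let $\tilde{\Delta}:\{k\in\mathbb{N}_0^{\{0,1\}^2}: k_{++}=n\}\to[-1,1]$ be another function satisfying (i)–(iii). If $\tilde{\Delta}$ is worse than $\underline{\Delta}$ as a lower $\beta$-confidence bound for the estimation problem ($\mathcal{P}_{2,\le}$, parameter in (iii)), then $\tilde{\Delta}$ is worse than $\underline{\Delta}$ also for the estimation problem ($\mathcal{P}_2$, parameter in (ii)), and equivalently for ($\mathcal{M}$, parameter in (i)). C. If $\underline{\Delta}$ is an admissible $\beta$-confidence bound for one of the estimation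 problems ($\mathcal{M}$, parameter in (i)) and ($\mathcal{P}_2$, parameter in (ii)), then it is admissible for the other one as well, and also for ($\mathcal{P}_{2,\le}$, parameter in (iii)).
   Context: For a finite set $\mathcal{X}$, $\mathrm{prob}(\mathcal{X})$ denotes the set of probability densities $p:\mathcal{X}\to[0,1]$ with $\sum_x p_x=1$; for finite sets $\mathcal{X},\mathcal{Y}$, $\mathrm{markov}(\mathcal{X},\mathcal{Y})$ denotes the set of maps $(x,y)\mapsto p_{y|x}$ with $p_{\cdot|x}\in\mathrm{prob}(\mathcal{Y})$ for every $x$. $\mathrm{M}_{n,p}$ is the multinomial distribution with sample size $n$ and probability vector $p$, i.e. $\mathrm{M}_{n,p}(\{k\})=n!\prod_x p_x^{k_x}/k_x!$ for $k\in\mathbb{N}_0^{\mathcal{X}}$ with $\sum_x k_x=n$. A subscript $+$ denotes summation over the replaced index, e.g. $k_{++}=\sum_{i,j}k_{ij}$, $q_{1+}=q_{10}+q_{11}$. Let $\Theta_2:=\mathrm{prob}(\{0,1\})\times\mathrm{markov}(\{0,1\},\{0,1\}^2)$, with elements $\theta=(\pi,\chi)$. Define $\mu(\theta)\in\mathrm{prob}(\{0,1\}^2)$ by $\mu(\theta)_j=\sum_{i=0}^1\pi_i\chi_{j|i}$ for $j\in\{0,1\}^2$, and $P_\theta:=\mathrm{M}_{n,\mu(\theta)}$. For $i,\iota\in\{0,1\}$ put $\chi^{(1)}_{\iota|i}:=\chi_{\iota 0|i}+\chi_{\iota 1|i}$ and $\chi^{(2)}_{\iota|i}:=\chi_{0\iota|i}+\chi_{1\iota|i}$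 (characteristics of the first and second test; $\pi_1$ is the prevalence, $\chi^{(m)}_{1|1}$ the sensitivity and $\chi^{(m)}_{0|0}$ the specificity of test $m$). The full latent class model is $\mathcal{P}_2:=(P_\theta:\theta\in\Theta_2)$; the restricted latent class model is $\mathcal{P}_{2,\le}:=(P_\theta:\theta\in\Theta_{2,\le})$ with $\Theta_{2,\le}:=\{(\pi,\chi)\in\Theta_2:\chi^{(1)}_{0|0}\le\chi^{(2)}_{0|0}\}$. For a statistical model $(P_\theta:\theta\in\Theta)$ on a sample space and a parameter $\kappa:\Theta\to\overline{\mathbb{R}}$ (not necessarily identifiable), a measurable $\underline{\kappa}$ with values in $\overline{\mathbb{R}}$ is a lower $\beta$-confidence bound if $P_\theta(\underline{\kappa}\le\kappa(\theta))\ge\beta$ for all $\theta$. For two such bounds, $\tilde{\kappa}$ is called worse than $\underline{\kappa}$ if $P_\theta(\tilde{\kappa}\ge t)\le P_\theta(\underline{\kappa}\ge t)$ for all $\theta\in\Theta$ and all $t<\kappa(\theta)$; strictly worse if moreover strict inequality holds for at least one $\theta$ and $t$. $\underline{\kappa}$ is admissible (as a lower $\beta$-confidence bound for the problem) if no other lower $\beta$-confidence bound for that problem is strictly better (i.e. no bound relative to which $\underline{\kappa}$ is strictly worse). *)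

theory Defs
  imports "HOL-Analysis.Analysis" "HOL-Library.Extended_Real"
begin

text \<open>The set {0,1} is encoded as bool (False = 0, True = 1); {0,1}^2 as bool \<times> bool.
  An observation is a count vector k :: bool \<times> bool \<Rightarrow> nat.\<close>

type_synonym cell = "bool \<times> bool"
type_synonym counts = "cell \<Rightarrow> nat"

definition prob_dens :: "('a::finite \<Rightarrow> real) \<Rightarrow> bool" where
  "prob_dens p \<longleftrightarrow> (\<forall>x. 0 \<le> p x \<and> p x \<le> 1) \<and> (\<Sum>x\<in>UNIV. p x) = 1"

definition sample_space :: "nat \<Rightarrow> counts set" where
  "sample_space n = {k. (\<Sum>x\<in>UNIV. k x) = n}"

definition multinom :: "nat \<Rightarrow> (cell \<Rightarrow> real) \<Rightarrow> counts \<Rightarrow> real" where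
  "multinom n q k = fact n * (\<Prod>x\<in>UNIV. q x ^ k x / fact (k x))"

definition Mprob :: "nat \<Rightarrow> (cell \<Rightarrow> real) \<Rightarrow> (counts \<Rightarrow> bool) \<Rightarrow> real" where
  "Mprob n q A = (\<Sum>k\<in>{k\<in>sample_space n. A k}. multinom n q k)"

text \<open>Generic model (P_theta : theta \<in> Theta) with P_theta = M_{n, qm theta} and parameter kappa.
  Bounds take values in the extended reals; every function on the finite (discrete)
  sample space is measurable.\<close>

definition lower_conf_bound ::
  "nat \<Rightarrow> real \<Rightarrow> 'p set \<Rightarrow> ('p \<Rightarrow> cell \<Rightarrow> real) \<Rightarrow> ('p \<Rightarrow> real) \<Rightarrow> (counts \<Rightarrow> ereal) \<Rightarrow> bool" where
  "lower_conf_bound n \<beta> \<Theta> qm \<kappa> D \<longleftrightarrow>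
     (\<forall>\<theta>\<in>\<Theta>. Mprob n (qm \<theta>) (\<lambda>k. D k \<le> ereal (\<kappa> \<theta>)) \<ge> \<beta>)"

definition worse ::
  "nat \<Rightarrow> 'p set \<Rightarrow> ('p \<Rightarrow> cell \<Rightarrow> real) \<Rightarrow> ('p \<Rightarrow> real) \<Rightarrow> (counts \<Rightarrow> ereal) \<Rightarrow> (counts \<Rightarrow> ereal) \<Rightarrow> bool" where
  "worse n \<Theta> qm \<kappa> Dt D \<longleftrightarrow>
     (\<forall>\<theta>\<in>\<Theta>. \<forall>t::ereal. t < ereal (\<kappa> \<theta>) \<longrightarrow>
        Mprob n (qm \<theta>) (\<lambda>k. Dt k \<ge> t) \<le> Mprob n (qm \<theta>) (\<lambda>k. D k \<ge> t))"

definition strictly_worse ::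
  "nat \<Rightarrow> 'p set \<Rightarrow> ('p \<Rightarrow> cell \<Rightarrow> real) \<Rightarrow> ('p \<Rightarrow> real) \<Rightarrow> (counts \<Rightarrow> ereal) \<Rightarrow> (counts \<Rightarrow> ereal) \<Rightarrow> bool" where
  "strictly_worse n \<Theta> qm \<kappa> Dt D \<longleftrightarrow> worse n \<Theta> qm \<kappa> Dt D \<and>
     (\<exists>\<theta>\<in>\<Theta>. \<exists>t::ereal. t < ereal (\<kappa> \<theta>) \<and>
        Mprob n (qm \<theta>) (\<lambda>k. Dt k \<ge> t) < Mprob n (qm \<theta>) (\<lambda>k. D k \<ge> t))"

definition admissible ::
  "nat \<Rightarrow> real \<Rightarrow> 'p set \<Rightarrow> ('p \<Rightarrow> cell \<Rightarrow> real) \<Rightarrow> ('p \<Rightarrow> real) \<Rightarrow> (counts \<Rightarrow> ereal) \<Rightarrow> bool" where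
  "admissible n \<beta> \<Theta> qm \<kappa> D \<longleftrightarrow> lower_conf_bound n \<beta> \<Theta> qm \<kappa> D \<and>
     \<not> (\<exists>D'. lower_conf_bound n \<beta> \<Theta> qm \<kappa> D' \<and> strictly_worse n \<Theta> qm \<kappa> D D')"

definition ThetaM :: "(cell \<Rightarrow> real) set" where
  "ThetaM = {q. prob_dens q}"

definition kappaM :: "(cell \<Rightarrow> real) \<Rightarrow> real" where
  "kappaM q = q (False, True) - q (True, False)"

text \<open>Latent class model: theta = (pi, chi), chi i j = chi_{j|i}.\<close>
type_synonym lcparam = "(bool \<Rightarrow> real) \<times> (bool \<Rightarrow> cell \<Rightarrow> real)"

definition Theta2 :: "lcparam set" where
  "Theta2 = {(pr, ch). prob_dens pr \<and> (\<forall>i. prob_dens (ch i))}"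

definition mu :: "lcparam \<Rightarrow> cell \<Rightarrow> real" where
  "mu \<theta> j = (\<Sum>i\<in>UNIV. fst \<theta> i * snd \<theta> i j)"

text \<open>chi1 chi iota i = chi^{(1)}_{iota|i}, chi2 chi iota i = chi^{(2)}_{iota|i}.\<close>
definition chi1 :: "(bool \<Rightarrow> cell \<Rightarrow> real) \<Rightarrow> bool \<Rightarrow> bool \<Rightarrow> real" where
  "chi1 ch \<iota> i = ch i (\<iota>, False) + ch i (\<iota>, True)"

definition chi2 :: "(bool \<Rightarrow> cell \<Rightarrow> real) \<Rightarrow> bool \<Rightarrow> bool \<Rightarrow> real" where
  "chi2 ch \<iota> i = ch i (False, \<iota>) + ch i (True, \<iota>)"

definition Theta2le :: "lcparam set" where
  "Theta2le = {(pr, ch) \<in> Theta2. chi1 ch False False \<le> chi2 ch False False}"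

definition kappa2 :: "lcparam \<Rightarrow> real" where
  "kappa2 \<theta> = (case \<theta> of (pr, ch) \<Rightarrow>
     pr True * (chi2 ch True True - chi1 ch True True)
     - (1 - pr True) * (chi2 ch False False - chi1 ch False False))"

definition kappa2le :: "lcparam \<Rightarrow> real" where
  "kappa2le \<theta> = (case \<theta> of (pr, ch) \<Rightarrow> pr True * (chi2 ch True True - chi1 ch True True))"

end

theory Submission
  imports Defs "HOL-Computational_Algebra.Polynomial"
begin

lemma sum_cell: "(\<Sum>x\<in>(UNIV::cell set). f x) = f (False,False) + f (False,True) + f (True,False) + f (True,True)"
proof -
  have *: "(UNIV::cell set) = {(False,False),(False,True),(True,False),(True,True)}" by auto
  show ?thesis by (subst *) (simp add: add.assoc)
qed

lemma sum_bool: "(\<Sum>x\<in>(UNIV::bool set). f x) = f False + f True"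
  by (simp add: UNIV_bool)

lemma L1: assumes "\<theta> \<in> Theta2" shows "mu \<theta> \<in> ThetaM"
proof -
  obtain a b where th: "\<theta> = (a,b)" by (cases \<theta>)
  have a: "\<And>x. 0 \<le> a x" "a False + a True = 1" and b: "\<And>i j. 0 \<le> b i j" "\<And>i j. b i j \<le> 1"
    "\<And>i. (\<Sum>j\<in>UNIV. b i j) = 1"
    using assms by (auto simp: th Theta2_def prob_dens_def sum_bool)
  have m: "mu \<theta> j = a False * b False j + a True * b True j" for j
    by (simp add: mu_def th sum_bool)
  have "0 \<le> mu \<theta> j" for j unfolding m using a b by (simp add: add_nonneg_nonneg)
  moreover have "mu \<theta> j \<le> 1" for j
  proof -
    have "a False * b False j \<le> a False" using a b mult_left_le by blast
    moreover have "a True * b True j \<le> a True" using a b mult_left_le by blast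
    ultimately show ?thesis unfolding m using a by linarith
  qed
  moreover have "(\<Sum>j\<in>UNIV. mu \<theta> j) = 1"
    unfolding m sum.distrib sum_distrib_left[symmetric] using a b by simp
  ultimately show ?thesis by (simp add: ThetaM_def prob_dens_def)
qed

lemma L2: assumes "\<theta> \<in> Theta2" shows "kappa2 \<theta> = kappaM (mu \<theta>)"
proof -
  obtain a b where th: "\<theta> = (a,b)" by (cases \<theta>)
  have h: "a False = 1 - a True"
    using assms by (auto simp: th Theta2_def prob_dens_def sum_bool)
  show ?thesis
    by (simp add: h th kappa2_def kappaM_def mu_def sum_bool chi1_def chi2_def algebra_simps)
qed

definition emb :: "(cell \<Rightarrow> real) \<Rightarrow> lcparam" where
  "emb q = ((\<lambda>i. if i then 1 else 0), (\<lambda>i. if i then q else (\<lambda>j. if j = (False,False) then 1 else 0)))"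

lemma L3: assumes "q \<in> ThetaM"
  shows "emb q \<in> Theta2le" "mu (emb q) = q" "kappa2le (emb q) = kappaM q" "kappa2 (emb q) = kappaM q"
  using assms
  by (auto simp: emb_def Theta2le_def Theta2_def kappa2_def kappa2le_def ThetaM_def kappaM_def prob_dens_def mu_def sum_bool sum_cell chi1_def chi2_def fun_eq_iff)

lemma L4: assumes "\<theta> \<in> Theta2le" shows "kappa2 \<theta> \<le> kappa2le \<theta>"
proof -
  obtain a b where th: "\<theta> = (a,b)" by (cases \<theta>)
  have "a True \<le> 1" "chi1 b False False \<le> chi2 b False False"
    using assms by (auto simp: th Theta2le_def Theta2_def prob_dens_def)
  then show ?thesis by (simp add: th kappa2_def kappa2le_def)
qed

lemma L5: assumes "\<theta> \<in> Theta2le" shows "kappa2le \<theta> \<le> 1"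
proof -
  obtain a b where th: "\<theta> = (a,b)" by (cases \<theta>)
  have h: "0 \<le> a True" "a True \<le> 1" "0 \<le> b True (True,False)" "b True (False,True) \<le> 1"
    using assms by (auto simp: th Theta2le_def Theta2_def prob_dens_def)
  have "kappa2le \<theta> = a True * (b True (False,True) - b True (True,False))"
    by (simp add: th kappa2le_def chi1_def chi2_def)
  also have "\<dots> \<le> 1"
  proof (cases "b True (False,True) - b True (True,False) \<le> 0")
    case True then show ?thesis using h by (smt (verit) mult_nonneg_nonpos)
  next
    case False then show ?thesis using h
      by (smt (verit) mult_left_le_one_le mult_le_one)
  qed
  finally show ?thesis .
qed

lemma finite_ss: "finite (sample_space n)"
proof -
  have "sample_space n \<subseteq> Pi\<^sub>E UNIV (\<lambda>_. {..n})"
  proof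
    fix k assume "k \<in> sample_space n"
    moreover have "k x \<le> sum k UNIV" for x by (rule member_le_sum) auto
    ultimately show "k \<in> Pi\<^sub>E UNIV (\<lambda>_. {..n})"
      unfolding sample_space_def PiE_UNIV_domain by auto
  qed
  moreover have "finite (Pi\<^sub>E (UNIV::cell set) (\<lambda>_. {..n}))" by (intro finite_PiE) auto
  ultimately show ?thesis by (rule finite_subset)
qed

lemma multinom_nonneg: "(\<And>x. 0 \<le> q x) \<Longrightarrow> 0 \<le> multinom n q k"
  unfolding multinom_def by (intro mult_nonneg_nonneg prod_nonneg divide_nonneg_pos) auto

lemma Mprob_mono: assumes "\<And>x. 0 \<le> q x" "\<And>k. A k \<Longrightarrow> B k"
  shows "Mprob n q A \<le> Mprob n q B"
  unfolding Mprob_def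
  by (rule sum_mono2) (use finite_ss assms multinom_nonneg in auto)

definition PM :: "nat \<Rightarrow> (cell \<Rightarrow> real) \<Rightarrow> (cell \<Rightarrow> real) \<Rightarrow> (counts \<Rightarrow> bool) \<Rightarrow> real poly" where
  "PM n q0 q1 A = (\<Sum>k\<in>{k\<in>sample_space n. A k}. smult (fact n)
      (\<Prod>x\<in>UNIV. smult (1 / fact (k x)) ([:q0 x, q1 x - q0 x:] ^ (k x))))"

lemma poly_PM: "Mprob n (\<lambda>x. q0 x + s * (q1 x - q0 x)) A = poly (PM n q0 q1 A) s"
  unfolding Mprob_def multinom_def PM_def
  by (simp add: poly_sum poly_prod algebra_simps)

lemma strict_transfer:
  fixes D D' :: "counts \<Rightarrow> ereal"
  assumes q0: "q0 \<in> ThetaM" and t1: "t < 1"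
    and lt: "Mprob n q0 (\<lambda>k. D k \<ge> t) < Mprob n q0 (\<lambda>k. D' k \<ge> t)"
    and le: "\<forall>q\<in>ThetaM. t < ereal (kappaM q) \<longrightarrow> Mprob n q (\<lambda>k. D k \<ge> t) \<le> Mprob n q (\<lambda>k. D' k \<ge> t)"
  shows "\<exists>q\<in>ThetaM. t < ereal (kappaM q) \<and> Mprob n q (\<lambda>k. D k \<ge> t) < Mprob n q (\<lambda>k. D' k \<ge> t)"
proof (rule ccontr)
  assume nex: "\<not> ?thesis"
  define q1 :: "cell \<Rightarrow> real" where "q1 = (\<lambda>j. if j = (False,True) then 1 else 0)"
  define qs where "qs s = (\<lambda>x. q0 x + s * (q1 x - q0 x))" for s :: real
  define P where "P = PM n q0 q1 (\<lambda>k. D' k \<ge> t) - PM n q0 q1 (\<lambda>k. D k \<ge> t)"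
  have fP: "poly P s = Mprob n (qs s) (\<lambda>k. D' k \<ge> t) - Mprob n (qs s) (\<lambda>k. D k \<ge> t)" for s
    by (simp add: P_def qs_def poly_PM)
  have q0p: "\<And>x. 0 \<le> q0 x" "\<And>x. q0 x \<le> 1" "(\<Sum>x\<in>UNIV. q0 x) = 1"
    using q0 by (auto simp: ThetaM_def prob_dens_def)
  obtain r where r: "t \<le> ereal r" "r < 1"
  proof (cases t)
    case (real r) then show ?thesis using t1 that[of r] by auto
  next
    case PInf then show ?thesis using t1 by auto
  next
    case MInf then show ?thesis using that[of 0] by auto
  qed
  define s1 where "s1 = max 0 ((r + 1) / 2)"
  have s1: "s1 < 1" using r by (simp add: s1_def)
  have zero: "poly P s = 0" if s: "s \<in> {s1<..1}" for s
  proof -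
    have s0: "0 \<le> s" "s \<le> 1" "(r+1)/2 < s" using s by (auto simp: s1_def)
    have qsx: "qs s x = (1 - s) * q0 x + s * q1 x" for x by (simp add: qs_def algebra_simps)
    have "qs s \<in> ThetaM"
    proof -
      have "0 \<le> qs s x" for x unfolding qsx using q0p s0 by (simp add: q1_def)
      moreover have "qs s x \<le> 1" for x
      proof -
        have "(1 - s) * q0 x \<le> 1 - s" using q0p s0 by (simp add: mult_left_le)
        moreover have "s * q1 x \<le> s" using s0 by (simp add: q1_def)
        ultimately show ?thesis unfolding qsx by linarith
      qed
      moreover have "(\<Sum>x\<in>UNIV. qs s x) = 1"
        unfolding qsx sum.distrib sum_distrib_left[symmetric] using q0p
        by (simp add: q1_def sum_cell)
      ultimately show ?thesis by (simp add: ThetaM_def prob_dens_def)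
    qed
    moreover have "t < ereal (kappaM (qs s))"
    proof -
      have e: "kappaM (qs s) = (1 - s) * (q0 (False,True) - q0 (True,False)) + s"
        by (simp add: kappaM_def qsx q1_def algebra_simps)
      have "(1 - s) * (-1) + s \<le> (1 - s) * (q0 (False,True) - q0 (True,False)) + s"
        using q0p(1)[of "(False,True)"] q0p(2)[of "(True,False)"] s0
        by (intro add_right_mono mult_left_mono) auto
      then have "kappaM (qs s) > r" using s0 e by (simp add: algebra_simps)
      then show ?thesis using r(1) by (meson less_ereal.simps(1) order_le_less_trans)
    qed
    ultimately show ?thesis using le nex unfolding fP by force
  qed
  have "infinite {s1<..1}" using s1 by simp
  moreover have "{s1<..1} \<subseteq> {x. poly P x = 0}" using zero by auto
  ultimately have "infinite {x. poly P x = 0}" using finite_subset by blast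
  then have "P = 0" using poly_roots_finite by blast
  then have "poly P 0 = 0" by simp
  moreover have "qs 0 = q0" by (simp add: qs_def)
  ultimately show False using lt fP[of 0] by simp
qed

lemma ThetaM_nonneg: "q \<in> ThetaM \<Longrightarrow> 0 \<le> q x"
  by (cases x) (simp add: ThetaM_def prob_dens_def)

lemma Theta2le_sub: "\<theta> \<in> Theta2le \<Longrightarrow> \<theta> \<in> Theta2"
  unfolding Theta2le_def by auto

lemma T1: "lower_conf_bound n \<beta> ThetaM id kappaM D \<longleftrightarrow> lower_conf_bound n \<beta> Theta2 mu kappa2 D"
  unfolding lower_conf_bound_def
proof safe
  fix \<theta> assume "\<forall>q\<in>ThetaM. \<beta> \<le> Mprob n (id q) (\<lambda>k. D k \<le> ereal (kappaM q))" "\<theta> \<in> Theta2"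
  then show "\<beta> \<le> Mprob n (mu \<theta>) (\<lambda>k. D k \<le> ereal (kappa2 \<theta>))"
    using L1 L2 by fastforce
next
  fix q assume h: "\<forall>\<theta>\<in>Theta2. \<beta> \<le> Mprob n (mu \<theta>) (\<lambda>k. D k \<le> ereal (kappa2 \<theta>))" "q \<in> ThetaM"
  have "emb q \<in> Theta2" using L3(1)[OF h(2)] by (rule Theta2le_sub)
  then show "\<beta> \<le> Mprob n (id q) (\<lambda>k. D k \<le> ereal (kappaM q))"
    using h L3[OF h(2)] by fastforce
qed

lemma T2: "lower_conf_bound n \<beta> Theta2 mu kappa2 D \<Longrightarrow> lower_conf_bound n \<beta> Theta2le mu kappa2le D"
  unfolding lower_conf_bound_def
proof safe
  fix \<theta> assume h: "\<forall>\<theta>\<in>Theta2. \<beta> \<le> Mprob n (mu \<theta>) (\<lambda>k. D k \<le> ereal (kappa2 \<theta>))" "\<theta> \<in> Theta2le"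
  have t2: "\<theta> \<in> Theta2" using h(2) by (rule Theta2le_sub)
  have "Mprob n (mu \<theta>) (\<lambda>k. D k \<le> ereal (kappa2 \<theta>)) \<le> Mprob n (mu \<theta>) (\<lambda>k. D k \<le> ereal (kappa2le \<theta>))"
    using L4[OF h(2)] ThetaM_nonneg[OF L1[OF t2]]
    by (intro Mprob_mono) (auto intro: order_trans)
  then show "\<beta> \<le> Mprob n (mu \<theta>) (\<lambda>k. D k \<le> ereal (kappa2le \<theta>))" using h t2 by force
qed

lemma T3: "lower_conf_bound n \<beta> Theta2le mu kappa2le D \<Longrightarrow> lower_conf_bound n \<beta> ThetaM id kappaM D"
  unfolding lower_conf_bound_def using L3 by fastforce

lemma W1: "worse n ThetaM id kappaM D1 D2 \<longleftrightarrow> worse n Theta2 mu kappa2 D1 D2"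
  unfolding worse_def
proof safe
  fix \<theta> t assume "\<forall>q\<in>ThetaM. \<forall>t. t < ereal (kappaM q) \<longrightarrow> Mprob n (id q) (\<lambda>k. t \<le> D1 k) \<le> Mprob n (id q) (\<lambda>k. t \<le> D2 k)"
    "\<theta> \<in> Theta2" "t < ereal (kappa2 \<theta>)"
  then show "Mprob n (mu \<theta>) (\<lambda>k. t \<le> D1 k) \<le> Mprob n (mu \<theta>) (\<lambda>k. t \<le> D2 k)"
    using L1 L2 by fastforce
next
  fix q t assume h: "\<forall>\<theta>\<in>Theta2. \<forall>t. t < ereal (kappa2 \<theta>) \<longrightarrow> Mprob n (mu \<theta>) (\<lambda>k. t \<le> D1 k) \<le> Mprob n (mu \<theta>) (\<lambda>k. t \<le> D2 k)"
    "q \<in> ThetaM" "t < ereal (kappaM q)"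
  have "emb q \<in> Theta2" using L3(1)[OF h(2)] by (rule Theta2le_sub)
  then show "Mprob n (id q) (\<lambda>k. t \<le> D1 k) \<le> Mprob n (id q) (\<lambda>k. t \<le> D2 k)"
    using h L3[OF h(2)] by fastforce
qed

lemma W2: "worse n Theta2le mu kappa2le D1 D2 \<Longrightarrow> worse n ThetaM id kappaM D1 D2"
  unfolding worse_def using L3 by fastforce

lemma S1: "strictly_worse n ThetaM id kappaM D1 D2 \<longleftrightarrow> strictly_worse n Theta2 mu kappa2 D1 D2"
  unfolding strictly_worse_def W1
proof (intro conj_cong refl iffI)
  assume "\<exists>q\<in>ThetaM. \<exists>t. t < ereal (kappaM q) \<and> Mprob n (id q) (\<lambda>k. t \<le> D1 k) < Mprob n (id q) (\<lambda>k. t \<le> D2 k)"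
  then obtain q t where h: "q \<in> ThetaM" "t < ereal (kappaM q)" "Mprob n q (\<lambda>k. t \<le> D1 k) < Mprob n q (\<lambda>k. t \<le> D2 k)"
    by auto
  have "emb q \<in> Theta2" using L3(1)[OF h(1)] by (rule Theta2le_sub)
  then show "\<exists>\<theta>\<in>Theta2. \<exists>t. t < ereal (kappa2 \<theta>) \<and> Mprob n (mu \<theta>) (\<lambda>k. t \<le> D1 k) < Mprob n (mu \<theta>) (\<lambda>k. t \<le> D2 k)"
    using h L3[OF h(1)] by metis
next
  assume "\<exists>\<theta>\<in>Theta2. \<exists>t. t < ereal (kappa2 \<theta>) \<and> Mprob n (mu \<theta>) (\<lambda>k. t \<le> D1 k) < Mprob n (mu \<theta>) (\<lambda>k. t \<le> D2 k)"
  then show "\<exists>q\<in>ThetaM. \<exists>t. t < ereal (kappaM q) \<and> Mprob n (id q) (\<lambda>k. t \<le> D1 k) < Mprob n (id q) (\<lambda>k. t \<le> D2 k)"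
    using L1 L2 by (metis id_apply)
qed

lemma S2: "strictly_worse n Theta2le mu kappa2le D1 D2 \<Longrightarrow> strictly_worse n ThetaM id kappaM D1 D2"
proof -
  assume a: "strictly_worse n Theta2le mu kappa2le D1 D2"
  then have w: "worse n ThetaM id kappaM D1 D2" unfolding strictly_worse_def using W2 by blast
  from a obtain \<theta> t where h: "\<theta> \<in> Theta2le" "t < ereal (kappa2le \<theta>)"
    "Mprob n (mu \<theta>) (\<lambda>k. t \<le> D1 k) < Mprob n (mu \<theta>) (\<lambda>k. t \<le> D2 k)"
    unfolding strictly_worse_def by blast
  have t2: "\<theta> \<in> Theta2" using h(1) by (rule Theta2le_sub)
  have "ereal (kappa2le \<theta>) \<le> 1" using L5[OF h(1)] by simp
  then have t1: "t < 1" using h(2) by (rule order_less_le_trans[rotated])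
  have "\<exists>q\<in>ThetaM. t < ereal (kappaM q) \<and> Mprob n q (\<lambda>k. D1 k \<ge> t) < Mprob n q (\<lambda>k. D2 k \<ge> t)"
    by (rule strict_transfer[OF L1[OF t2] t1]) (use h(3) w in \<open>auto simp: worse_def\<close>)
  then show ?thesis using w unfolding strictly_worse_def by auto
qed

theorem theorem1:
  fixes \<beta> :: real and n :: nat and \<Delta> :: "counts \<Rightarrow> real"
  assumes "0 \<le> \<beta>" "\<beta> \<le> 1" "1 \<le> n"
    and "\<forall>k\<in>sample_space n. -1 \<le> \<Delta> k \<and> \<Delta> k \<le> 1"
  shows
    "(lower_conf_bound n \<beta> ThetaM id kappaM (\<lambda>k. ereal (\<Delta> k))
        \<longleftrightarrow> lower_conf_bound n \<beta> Theta2 mu kappa2 (\<lambda>k. ereal (\<Delta> k)))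
     \<and> (lower_conf_bound n \<beta> Theta2 mu kappa2 (\<lambda>k. ereal (\<Delta> k))
        \<longleftrightarrow> lower_conf_bound n \<beta> Theta2le mu kappa2le (\<lambda>k. ereal (\<Delta> k)))
     \<and> (\<forall>\<Delta>t :: counts \<Rightarrow> real.
          (\<forall>k\<in>sample_space n. -1 \<le> \<Delta>t k \<and> \<Delta>t k \<le> 1)
          \<longrightarrow> lower_conf_bound n \<beta> ThetaM id kappaM (\<lambda>k. ereal (\<Delta> k))
          \<longrightarrow> lower_conf_bound n \<beta> Theta2 mu kappa2 (\<lambda>k. ereal (\<Delta> k))
          \<longrightarrow> lower_conf_bound n \<beta> Theta2le mu kappa2le (\<lambda>k. ereal (\<Delta> k))
          \<longrightarrow> lower_conf_bound n \<beta> ThetaM id kappaM (\<lambda>k. ereal (\<Delta>t k))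
          \<longrightarrow> lower_conf_bound n \<beta> Theta2 mu kappa2 (\<lambda>k. ereal (\<Delta>t k))
          \<longrightarrow> lower_conf_bound n \<beta> Theta2le mu kappa2le (\<lambda>k. ereal (\<Delta>t k))
          \<longrightarrow> worse n Theta2le mu kappa2le (\<lambda>k. ereal (\<Delta>t k)) (\<lambda>k. ereal (\<Delta> k))
          \<longrightarrow> worse n Theta2 mu kappa2 (\<lambda>k. ereal (\<Delta>t k)) (\<lambda>k. ereal (\<Delta> k))
            \<and> worse n ThetaM id kappaM (\<lambda>k. ereal (\<Delta>t k)) (\<lambda>k. ereal (\<Delta> k)))
     \<and> ((admissible n \<beta> ThetaM id kappaM (\<lambda>k. ereal (\<Delta> k))
          \<or> admissible n \<beta> Theta2 mu kappa2 (\<lambda>k. ereal (\<Delta> k)))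
        \<longrightarrow> admissible n \<beta> ThetaM id kappaM (\<lambda>k. ereal (\<Delta> k))
          \<and> admissible n \<beta> Theta2 mu kappa2 (\<lambda>k. ereal (\<Delta> k))
          \<and> admissible n \<beta> Theta2le mu kappa2le (\<lambda>k. ereal (\<Delta> k)))"
proof -
  let ?D = "\<lambda>k. ereal (\<Delta> k)"
  have AM2: "admissible n \<beta> ThetaM id kappaM D \<longleftrightarrow> admissible n \<beta> Theta2 mu kappa2 D" for D
    unfolding admissible_def T1 S1 ..
  have AMle: "admissible n \<beta> Theta2le mu kappa2le D" if "admissible n \<beta> ThetaM id kappaM D" for D
    using that unfolding admissible_def using T1 T2 T3 S2 by blast
  show ?thesis
    using T1 T2 T3 W1 W2 AM2 AMle by blast
qed

end
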